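(* For integers $N\ge 2$ and $n\ge 1$, $$B_{N,n}=\frac{N}{N+n}\left\{\sum_{m=0}^{n-1}\ \sum_{1\le i_m<\cdots<i_1<i_0=n}B_{N-1,i_m}\prod_{k=1}^{m}B_{N-1,\,i_{k-1}-i_k+1}\binom{i_{k-1}}{i_{k-1}-i_k+1}\frac{N}{N+i_k}\right\},$$ where for each $m$ the inner sum runs over all integers $i_1,\dots,i_m$ with $1\le i_m<\cdots<i_1<i_0=n$ (for $m=0$ the inner sum consists of the single term $B_{N-1,n}$, the empty product being $1$).
   Context: For a positive integer $N$, the hypergeometric Bernoulli numbers $B_{N,n}$ ($n\ge 0$) are defined by $$\frac{x^N/N!}{e^x-\sum_{n=0}^{N-1}x^n/n!}=\sum_{n=0}^\infty B_{N,n}\frac{x^n}{n!}.$$ *)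

theory Defs
  imports "HOL-Computational_Algebra.Formal_Power_Series"
begin

definition hb_gf :: "nat \<Rightarrow> real fps" where
  "hb_gf N = (fps_X ^ N / fps_const (fact N)) /
             (fps_exp 1 - (\<Sum>n<N. fps_const (1 / fact n) * fps_X ^ n))"

definition hyp_bernoulli :: "nat \<Rightarrow> nat \<Rightarrow> real" where
  "hyp_bernoulli N n = fact n * fps_nth (hb_gf N) n"

text \<open>Chains n = i_0 > i_1 > ... > i_m >= 1, encoded as functions nat => nat
  that vanish beyond index m.\<close>
definition chains :: "nat \<Rightarrow> nat \<Rightarrow> (nat \<Rightarrow> nat) set" where
  "chains n m = {i. i 0 = n \<and> (\<forall>k<m. i (Suc k) < i k) \<and> 1 \<le> i m \<and> (\<forall>k>m. i k = 0)}"

end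

theory Submission imports Defs begin
unbundle fps_syntax

definition Pf :: "nat \<Rightarrow> real fps" where "Pf N = Abs_fps (\<lambda>k. 1 / fact (N + k))"

lemma Pf_nth[simp]: "Pf N $ k = 1 / fact (N + k)"
  by (simp add: Pf_def)

lemma A_eq: "fps_exp 1 - (\<Sum>n<N. fps_const (1 / fact n) * fps_X ^ n) = fps_X ^ N * Pf N"
proof (rule fps_ext)
  fix k
  have "(\<Sum>n<N. fps_const (1 / fact n) * fps_X ^ n) $ k = (if k < N then 1 / fact k else (0::real))"
    by (simp add: fps_sum_nth if_distrib sum.delta cong: if_cong)
  then show "(fps_exp 1 - (\<Sum>n<N. fps_const (1 / fact n) * fps_X ^ n)) $ k = (fps_X ^ N * Pf N) $ k"
    by (simp add: fps_X_power_mult_nth)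
qed

lemma hb_P: "hb_gf N * Pf N = fps_const (1 / fact N)"
proof -
  let ?P = "Pf N" and ?c = "fps_const (1 / fact N) :: real fps"
  have P0: "?P $ 0 \<noteq> 0" by simp
  have num: "fps_X ^ N / fps_const (fact N) = fps_X ^ N * ?c"
    by (simp add: fps_divide_unit fps_const_inverse divide_inverse)
  have dv: "fps_X ^ N * ?P dvd fps_X ^ N * ?c"
  proof
    show "fps_X ^ N * ?c = fps_X ^ N * ?P * (inverse ?P * ?c)"
      using inverse_mult_eq_1'[OF P0] by (simp add: algebra_simps)
  qed
  have "hb_gf N * (fps_X ^ N * ?P) = fps_X ^ N * ?c"
    unfolding hb_gf_def A_eq num using dv by (rule dvd_div_mult_self)
  then have "fps_X ^ N * (hb_gf N * ?P) = fps_X ^ N * ?c" by (simp add: algebra_simps)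
  then show ?thesis by simp
qed

lemma key_id:
  assumes N2: "N \<ge> 2"
  defines "G \<equiv> hb_gf N" and "H \<equiv> hb_gf (N - 1)"
  shows "of_nat N * G + fps_X * fps_deriv G =
         of_nat N * H + fps_deriv G * (of_nat N * H - of_nat N + fps_X)"
proof -
  define M where "M = N - 1"
  have NM: "N = Suc M" using N2 unfolding M_def by simp
  define g where "g = fps_const (1 / fact N :: real)"
  define P where "P = Pf N"
  define Q where "Q = Pf M"
  define n :: "real fps" where "n = of_nat N"
  have GP: "G * P = g" unfolding G_def P_def g_def by (rule hb_P)
  have HQ0: "H * Q = fps_const (1 / fact M)" unfolding H_def Q_def M_def by (rule hb_P)
  have fpos: "fact M + fact M * real M \<noteq> (0::real)"
  proof -
    have "(0::real) < fact M + fact M * real M" by (simp add: add_pos_nonneg)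
    then show ?thesis by simp
  qed
  have fM: "(1 / fact M :: real) = of_nat N * (1 / fact N)"
  proof -
    have "(0::real) < fact M + fact M * real M" by (simp add: add_pos_nonneg)
    then show ?thesis unfolding NM by (simp add: field_simps)
  qed
  have HQ: "H * Q = n * g" unfolding HQ0 fM n_def g_def by (simp add: fps_const_mult[symmetric] fps_of_nat[symmetric])
  have Qe: "Q = n * g + fps_X * P"
  proof (rule fps_ext)
    fix k show "Q $ k = (n * g + fps_X * P) $ k"
      unfolding Q_def P_def n_def g_def
      by (cases k) (simp_all add: fps_of_nat[symmetric] fps_X_mult_nth NM field_simps fpos)
  qed
  have Pe: "fps_X * fps_deriv P = n * g + fps_X * P - n * P"
  proof (rule fps_ext)
    fix k show "(fps_X * fps_deriv P) $ k = (n * g + fps_X * P - n * P) $ k"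
    proof (cases k)
      case 0 then show ?thesis by (simp add: P_def n_def g_def fps_of_nat[symmetric] fps_X_mult_nth)
    next
      case (Suc j)
      have e: "fact (N + Suc j) = (real N + real (Suc j)) * fact (N + j)"
        by (simp add: algebra_simps)
      have "real (Suc j) * (1 / fact (N + Suc j)) = 1 / fact (N + j) - real N * (1 / fact (N + Suc j))"
      proof -
        have F: "fact (N + j) \<noteq> (0::real)" by simp
        have D: "real N + real (Suc j) \<noteq> 0" by simp
        show ?thesis unfolding e using F D by (simp add: divide_simps)
      qed
      then show ?thesis using Suc by (simp add: P_def n_def g_def fps_of_nat[symmetric] fps_X_mult_nth)
    qed
  qed
  have D: "fps_deriv G * P + G * fps_deriv P = 0"
  proof -
    have "fps_deriv (G * P) = 0" unfolding GP g_def by simp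
    then show ?thesis by (simp add: algebra_simps)
  qed
  have big: "(fps_X * P * P * Q) * (n * G + fps_X * fps_deriv G) =
             (fps_X * P * P * Q) * (n * H + fps_deriv G * (n * H - n + fps_X))"
  proof -
    have u: "fps_X * fps_deriv P = Q - n * P" using Pe Qe by simp
    have L: "(fps_X * P * P * Q) * (n * G + fps_X * fps_deriv G) = g * fps_X * Q * (2 * n * P - Q)"
    proof -
      have D': "fps_deriv G * P = - (G * fps_deriv P)" using D by (simp add: eq_neg_iff_add_eq_0)
      have "(fps_X * P * P * Q) * (n * G + fps_X * fps_deriv G) =
            n * fps_X * P * Q * (G * P) + fps_X * Q * P * (fps_deriv G * P) * fps_X"
        by (simp add: algebra_simps)
      also have "\<dots> = n * fps_X * P * Q * (G * P) - fps_X * Q * (G * P) * (fps_X * fps_deriv P)"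
        unfolding D' by (simp add: algebra_simps)
      also have "\<dots> = g * fps_X * Q * (2 * n * P - Q)"
        unfolding GP u by (simp add: algebra_simps)
      finally show ?thesis .
    qed
    have R: "(fps_X * P * P * Q) * (n * H + fps_deriv G * (n * H - n + fps_X)) = g * fps_X * Q * (2 * n * P - Q)"
    proof -
      have D': "fps_deriv G * P = - (G * fps_deriv P)" using D by (simp add: eq_neg_iff_add_eq_0)
      have "(fps_X * P * P * Q) * (n * H + fps_deriv G * (n * H - n + fps_X)) =
            n * fps_X * P * P * (H * Q) + fps_X * P * (fps_deriv G * P) * (n * (H * Q) - n * Q + fps_X * Q)"
        by (simp add: algebra_simps)
      also have "\<dots> = n * fps_X * P * P * (n * g) - (G * P) * (fps_X * fps_deriv P) * (n * (n * g) - n * Q + fps_X * Q)"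
        unfolding D' HQ by (simp add: algebra_simps del: HQ)
      also have "\<dots> = n * fps_X * P * P * (n * g) - g * (Q - n * P) * (n * (Q - fps_X * P) - n * Q + fps_X * Q)"
        unfolding GP u using Qe by simp
      also have "\<dots> = g * fps_X * Q * (2 * n * P - Q)"
        by (simp add: algebra_simps power2_eq_square)
      finally show ?thesis .
    qed
    show ?thesis using L R by (rule trans[OF _ sym])
  qed
  have nz: "fps_X * P * P * Q \<noteq> 0"
  proof -
    have "P \<noteq> 0" "Q \<noteq> 0" unfolding P_def Q_def by (metis Pf_nth fps_zero_nth zero_neq_one divide_eq_0_iff fact_nonzero)+
    then show ?thesis by simp
  qed
  show ?thesis using big nz unfolding n_def by simp
qed

lemma fpos: "fact M + fact M * real M \<noteq> (0::real)"
proof -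
  have "(0::real) < fact M + fact M * real M" by (simp add: add_pos_nonneg)
  then show ?thesis by simp
qed

lemma H01:
  assumes N2: "N \<ge> 2"
  shows "hb_gf (N - 1) $ 0 = 1" "hb_gf (N - 1) $ 1 = - 1 / real N"
proof -
  define M where "M = N - 1"
  have NM: "N = Suc M" using N2 unfolding M_def by simp
  have HQ: "hb_gf M * Pf M = fps_const (1 / fact M)" by (rule hb_P)
  have e0: "(hb_gf M * Pf M) $ 0 = 1 / fact M" unfolding HQ by simp
  then show h0: "hb_gf (N - 1) $ 0 = 1" unfolding M_def[symmetric] by (simp add: fps_mult_nth)
  have e1: "(hb_gf M * Pf M) $ 1 = 0" unfolding HQ by simp
  then have "hb_gf M $ 0 * (1 / fact (Suc M)) + hb_gf M $ 1 * (1 / fact M) = 0"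
    by (simp add: fps_mult_nth)
  then have "1 / fact (Suc M) + hb_gf M $ 1 * (1 / fact M) = (0::real)"
    using h0 unfolding M_def[symmetric] by simp
  then have "hb_gf M $ 1 = - fact M / fact (Suc M)"
    by (simp add: field_simps)
  also have "\<dots> = - 1 / real N" unfolding NM by (simp add: field_simps fpos)
  finally show "hb_gf (N - 1) $ 1 = - 1 / real N" unfolding M_def .
qed

lemma rec_b:
  assumes N2: "N \<ge> 2" and n1: "n \<ge> 1"
  defines "G \<equiv> hb_gf N" and "H \<equiv> hb_gf (N - 1)"
  shows "(real N + real n) * G $ n =
         real N * H $ n + real N * (\<Sum>i\<in>{1..<n}. real i * G $ i * H $ (n + 1 - i))"
proof -
  obtain p where np: "n = Suc p" using n1 by (cases n) auto
  have K: "(of_nat N * G + fps_X * fps_deriv G) $ n =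
         (of_nat N * H + fps_deriv G * (of_nat N * H - of_nat N + fps_X)) $ n"
    using key_id[OF N2] unfolding G_def H_def by simp
  define W where "W = of_nat N * H - of_nat N + (fps_X :: real fps)"
  have c0: "H $ 0 = 1" and c1: "H $ 1 = - 1 / real N" using H01[OF N2] unfolding H_def by auto
  have Nnz: "real N \<noteq> 0" using N2 by simp
  have W0: "W $ 0 = 0" unfolding W_def by (simp add: fps_of_nat[symmetric] c0)
  have c1': "H $ Suc 0 = - 1 / real N" using c1 by simp
  have W1: "W $ 1 = 0" unfolding W_def using Nnz by (simp add: fps_of_nat[symmetric] c1')
  have W2: "k \<ge> 2 \<Longrightarrow> W $ k = real N * H $ k" for k
    unfolding W_def by (simp add: fps_of_nat[symmetric] fps_X_nth)
  have lhs: "(of_nat N * G + fps_X * fps_deriv G) $ n = (real N + real n) * G $ n"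
    unfolding np by (simp add: fps_of_nat[symmetric] fps_X_mult_nth algebra_simps)
  have "(fps_deriv G * W) $ n = (\<Sum>i<Suc (Suc p). fps_deriv G $ i * W $ (Suc p - i))"
    unfolding np fps_mult_nth atLeast0AtMost lessThan_Suc_atMost ..
  also have "\<dots> = (\<Sum>i<p. fps_deriv G $ i * W $ (Suc p - i))"
    using W0 W1 by simp
  also have "\<dots> = (\<Sum>i<p. real N * (real (Suc i) * G $ Suc i * H $ (Suc p - i)))"
    by (rule sum.cong) (auto simp: W2)
  also have "\<dots> = real N * (\<Sum>i\<in>{1..<n}. real i * G $ i * H $ (n + 1 - i))"
  proof -
    have "(\<Sum>i\<in>{1..<Suc p}. real i * G $ i * H $ (Suc p + 1 - i)) =
          (\<Sum>i\<in>{0..<p}. real (Suc i) * G $ Suc i * H $ (Suc p + 1 - Suc i))"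
      by (simp only: One_nat_def sum.shift_bounds_Suc_ivl)
    moreover have "\<And>i. Suc p + 1 - Suc i = Suc p - i" by simp
    ultimately show ?thesis unfolding np sum_distrib_left[symmetric] atLeast0LessThan
      by (simp only:)
  qed
  finally have rhs2: "(fps_deriv G * W) $ n = real N * (\<Sum>i\<in>{1..<n}. real i * G $ i * H $ (n + 1 - i))" .
  have rhs: "(of_nat N * H + fps_deriv G * W) $ n = real N * H $ n + (fps_deriv G * W) $ n"
    by (simp add: fps_of_nat[symmetric])
  show ?thesis using K unfolding W_def[symmetric] lhs rhs rhs2 .
qed

lemma fact_choose_aux:
  assumes "1 \<le> i" "i < n"
  shows "(fact n :: real) * real i = fact (n - i + 1) * real (n choose (n - i + 1)) * fact i"
proof -
  have k: "n - i + 1 \<le> n" "n - (n - i + 1) = i - 1" using assms by auto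
  have "fact (n - i + 1) * fact (i - 1) * (n choose (n - i + 1)) = fact n"
    using binomial_fact_lemma[OF k(1)] k(2) by simp
  then have a: "(fact (n - i + 1) :: real) * fact (i - 1) * real (n choose (n - i + 1)) = fact n"
    by (metis of_nat_fact of_nat_mult)
  have b: "(fact i :: real) = real i * fact (i - 1)"
    using assms(1) by (metis Suc_diff_1 fact_Suc le_numeral_extra(2) less_le_trans of_nat_Suc less_one linorder_not_less)
  show ?thesis unfolding a[symmetric] b by (simp add: algebra_simps)
qed

lemma rec_B:
  assumes N2: "N \<ge> 2" and n1: "n \<ge> 1"
  shows "hyp_bernoulli N n = real N / real (N + n) *
    (hyp_bernoulli (N - 1) n + (\<Sum>i\<in>{1..<n}. hyp_bernoulli (N - 1) (n - i + 1) *
        real (n choose (n - i + 1)) * hyp_bernoulli N i))"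
proof -
  define G where "G = hb_gf N"
  define H where "H = hb_gf (N - 1)"
  have r: "(real N + real n) * G $ n =
         real N * H $ n + real N * (\<Sum>i\<in>{1..<n}. real i * G $ i * H $ (n + 1 - i))"
    using rec_b[OF N2 n1] unfolding G_def H_def .
  have sm: "fact n * (\<Sum>i\<in>{1..<n}. real i * G $ i * H $ (n + 1 - i)) =
      (\<Sum>i\<in>{1..<n}. hyp_bernoulli (N - 1) (n - i + 1) * real (n choose (n - i + 1)) * hyp_bernoulli N i)"
    unfolding sum_distrib_left
  proof (rule sum.cong)
    fix i assume "i \<in> {1..<n}"
    then have i: "1 \<le> i" "i < n" by auto
    have e: "n + 1 - i = n - i + 1" using i by simp
    show "fact n * (real i * G $ i * H $ (n + 1 - i)) =
          hyp_bernoulli (N - 1) (n - i + 1) * real (n choose (n - i + 1)) * hyp_bernoulli N i"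
      unfolding hyp_bernoulli_def G_def[symmetric] H_def[symmetric] e
    proof -
      have "fact n * (real i * G $ i * H $ (n - i + 1)) = (fact n * real i) * G $ i * H $ (n - i + 1)"
        by (simp only: mult.assoc)
      also have "\<dots> = (fact (n - i + 1) * real (n choose (n - i + 1)) * fact i) * G $ i * H $ (n - i + 1)"
        by (simp only: fact_choose_aux[OF i])
      also have "\<dots> = fact (n - i + 1) * H $ (n - i + 1) * real (n choose (n - i + 1)) * (fact i * G $ i)"
        by (simp only: mult_ac)
      finally show "fact n * (real i * G $ i * H $ (n - i + 1)) = fact (n - i + 1) * H $ (n - i + 1) * real (n choose (n - i + 1)) * (fact i * G $ i)" .
    qed
  qed simp
  have pos: "real N + real n \<noteq> 0" using N2 by simp
  have "fact n * G $ n = real N / real (N + n) * (fact n * H $ n + fact n * (\<Sum>i\<in>{1..<n}. real i * G $ i * H $ (n + 1 - i)))"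
    using r pos by (simp add: field_simps)
  then show ?thesis unfolding sm unfolding hyp_bernoulli_def G_def H_def .
qed

definition wt :: "nat \<Rightarrow> nat \<Rightarrow> nat \<Rightarrow> real" where
  "wt N a b = hyp_bernoulli (N - 1) (a - b + 1) * real (a choose (a - b + 1)) * (real N / real (N + b))"

definition Fc :: "nat \<Rightarrow> (nat \<Rightarrow> nat) \<Rightarrow> nat \<Rightarrow> real" where
  "Fc N i m = hyp_bernoulli (N - 1) (i m) * (\<Prod>k=1..m. wt N (i (k - 1)) (i k))"

definition Tc :: "nat \<Rightarrow> nat \<Rightarrow> nat \<Rightarrow> real" where
  "Tc N n m = (\<Sum>i\<in>chains n m. Fc N i m)"

definition Sc :: "nat \<Rightarrow> nat \<Rightarrow> real" where
  "Sc N n = (\<Sum>m=0..n-1. Tc N n m)"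

lemma chains_bound:
  assumes "i \<in> chains n m" "k \<le> m"
  shows "i k + k \<le> n"
  using assms(2)
proof (induction k)
  case 0 then show ?case using assms(1) by (simp add: chains_def)
next
  case (Suc k)
  then have "i (Suc k) < i k" using assms(1) by (simp add: chains_def)
  then show ?case using Suc by simp
qed

lemma chains_ge:
  assumes "i \<in> chains n m" "k \<le> m"
  shows "1 \<le> i k"
  using assms(2)
proof (induction k rule: inc_induct)
  case base then show ?case using assms(1) by (simp add: chains_def)
next
  case (step k)
  then have "i (Suc k) < i k" using assms(1) by (simp add: chains_def)
  then show ?case using step by simp
qed

lemma chains_empty: "n \<le> m \<Longrightarrow> chains n m = {}"
proof (rule ccontr)
  assume "n \<le> m" "chains n m \<noteq> {}"
  then obtain i where i: "i \<in> chains n m" by auto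
  have "i m + m \<le> n" using chains_bound[OF i] by simp
  moreover have "1 \<le> i m" using chains_ge[OF i] by simp
  ultimately show False using \<open>n \<le> m\<close> by simp
qed

lemma chains_finite: "finite (chains n m)"
proof -
  have "chains n m \<subseteq> {f. \<forall>x. (x \<in> {..m} \<longrightarrow> f x \<in> {..n}) \<and> (x \<notin> {..m} \<longrightarrow> f x = 0)}"
  proof
    fix i assume i: "i \<in> chains n m"
    show "i \<in> {f. \<forall>x. (x \<in> {..m} \<longrightarrow> f x \<in> {..n}) \<and> (x \<notin> {..m} \<longrightarrow> f x = 0)}"
      using chains_bound[OF i] i by (auto simp: chains_def) (metis add_leE)
  qed
  then show ?thesis by (rule finite_subset) (rule finite_set_of_finite_funs; simp)
qed

lemma chains_0: "1 \<le> n \<Longrightarrow> chains n 0 = {\<lambda>k. if k = 0 then n else 0}"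
  by (auto simp: chains_def fun_eq_iff)

lemma Tc_0: "1 \<le> n \<Longrightarrow> Tc N n 0 = hyp_bernoulli (N - 1) n"
  by (simp add: Tc_def chains_0 Fc_def)

lemma Tc_Suc: "Tc N n (Suc m) = (\<Sum>j\<in>{1..<n}. wt N n j * Tc N j m)"
proof -
  define phi where "phi = (\<lambda>(j::nat, i::nat \<Rightarrow> nat). (\<lambda>k. if k = 0 then n else i (k - 1)))"
  define psi where "psi = (\<lambda>a::nat \<Rightarrow> nat. (a 1, \<lambda>k. a (Suc k)))"
  have "(\<Sum>j\<in>{1..<n}. wt N n j * Tc N j m) = (\<Sum>j\<in>{1..<n}. \<Sum>i\<in>chains j m. wt N n j * Fc N i m)"
    by (simp add: Tc_def sum_distrib_left)
  also have "\<dots> = (\<Sum>(j, i)\<in>Sigma {1..<n} (\<lambda>j. chains j m). wt N n j * Fc N i m)"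
    by (rule sum.Sigma) (auto simp: chains_finite)
  also have "\<dots> = (\<Sum>a\<in>chains n (Suc m). Fc N a (Suc m))"
  proof (rule sum.reindex_bij_witness[where i = phi and j = psi, symmetric])
    fix a assume a: "a \<in> chains n (Suc m)"
    then show "phi (psi a) = a" by (auto simp: phi_def psi_def chains_def fun_eq_iff)
    have a1: "1 \<le> a 1" using chains_ge[OF a, of 1] by simp
    have a2: "a 1 < n" using a by (auto simp: chains_def)
    have a3: "(\<lambda>k. a (Suc k)) \<in> chains (a 1) m" using a by (auto simp: chains_def)
    show "psi a \<in> Sigma {1..<n} (\<lambda>j. chains j m)" using a1 a2 a3 by (simp add: psi_def)
    show "(case psi a of (j, i) \<Rightarrow> wt N n j * Fc N i m) = Fc N a (Suc m)"
    proof -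
      have a0: "a 0 = n" using a by (simp add: chains_def)
      have "(\<Prod>k=1..Suc m. wt N (a (k - 1)) (a k)) = wt N (a 0) (a 1) * (\<Prod>k=Suc 1..Suc m. wt N (a (k - 1)) (a k))"
        by (simp add: prod.atLeast_Suc_atMost)
      also have "(\<Prod>k=Suc 1..Suc m. wt N (a (k - 1)) (a k)) = (\<Prod>k=1..m. wt N (a k) (a (Suc k)))"
        by (simp only: prod.shift_bounds_cl_Suc_ivl) simp
      also have "\<dots> = (\<Prod>k=1..m. wt N (a (Suc (k - 1))) (a (Suc k)))"
        by (rule prod.cong) auto
      finally show ?thesis by (simp add: psi_def Fc_def a0)
    qed
  next
    fix b assume b: "b \<in> Sigma {1..<n} (\<lambda>j. chains j m)"
    obtain j i where bji: "b = (j, i)" by (cases b)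
    then have j: "1 \<le> j" "j < n" and i: "i \<in> chains j m" using b by auto
    show "psi (phi b) = b" using bji i by (auto simp: phi_def psi_def chains_def fun_eq_iff)
    have "(\<lambda>k. if k = 0 then n else i (k - 1)) \<in> chains n (Suc m)"
      unfolding chains_def
    proof (intro CollectI conjI allI impI)
      fix k assume "k < Suc m"
      then show "(if Suc k = 0 then n else i (Suc k - 1)) < (if k = 0 then n else i (k - 1))"
        using i j by (cases k) (auto simp: chains_def)
    next
      show "1 \<le> (if Suc m = 0 then n else i (Suc m - 1))" using chains_ge[OF i, of m] by simp
    next
      fix k assume "Suc m < k"
      then show "(if k = 0 then n else i (k - 1)) = 0" using i by (auto simp: chains_def)
    qed simp
    then show "phi b \<in> chains n (Suc m)" using bji by (simp add: phi_def)
  qed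
  finally show ?thesis unfolding Tc_def by simp
qed

lemma Sc_lt: "1 \<le> j \<Longrightarrow> j \<le> p \<Longrightarrow> (\<Sum>m<p. Tc N j m) = Sc N j"
proof -
  assume j: "1 \<le> j" "j \<le> p"
  have "Sc N j = (\<Sum>m<j. Tc N j m)"
    unfolding Sc_def using j by (cases j) (auto simp: atLeast0AtMost lessThan_Suc_atMost)
  also have "\<dots> = (\<Sum>m<p. Tc N j m)"
    by (rule sum.mono_neutral_left) (use j in \<open>auto simp: Tc_def chains_empty\<close>)
  finally show ?thesis by simp
qed

lemma Sc_rec: "1 \<le> n \<Longrightarrow> Sc N n = hyp_bernoulli (N - 1) n + (\<Sum>j\<in>{1..<n}. wt N n j * Sc N j)"
proof -
  assume n1: "1 \<le> n"
  then obtain p where np: "n = Suc p" by (cases n) auto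
  have "Sc N n = (\<Sum>m<Suc p. Tc N n m)"
    unfolding Sc_def np by (simp add: atLeast0AtMost lessThan_Suc_atMost)
  also have "\<dots> = Tc N n 0 + (\<Sum>m<p. Tc N n (Suc m))"
    by (rule sum.lessThan_Suc_shift)
  also have "(\<Sum>m<p. Tc N n (Suc m)) = (\<Sum>j\<in>{1..<n}. wt N n j * (\<Sum>m<p. Tc N j m))"
    unfolding Tc_Suc sum_distrib_left by (rule sum.swap)
  also have "\<dots> = (\<Sum>j\<in>{1..<n}. wt N n j * Sc N j)"
    by (rule sum.cong) (auto simp: np Sc_lt)
  finally show ?thesis using Tc_0[OF n1] by simp
qed

lemma main:
  assumes N2: "N \<ge> 2"
  shows "1 \<le> n \<Longrightarrow> hyp_bernoulli N n = real N / real (N + n) * Sc N n"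
proof (induction n rule: less_induct)
  case (less n)
  have "hyp_bernoulli N n = real N / real (N + n) *
    (hyp_bernoulli (N - 1) n + (\<Sum>i\<in>{1..<n}. hyp_bernoulli (N - 1) (n - i + 1) *
        real (n choose (n - i + 1)) * hyp_bernoulli N i))"
    by (rule rec_B[OF N2 less.prems])
  also have "(\<Sum>i\<in>{1..<n}. hyp_bernoulli (N - 1) (n - i + 1) *
        real (n choose (n - i + 1)) * hyp_bernoulli N i) = (\<Sum>j\<in>{1..<n}. wt N n j * Sc N j)"
  proof (rule sum.cong)
    fix i assume "i \<in> {1..<n}"
    then have "hyp_bernoulli N i = real N / real (N + i) * Sc N i" using less.IH by auto
    then show "hyp_bernoulli (N - 1) (n - i + 1) * real (n choose (n - i + 1)) * hyp_bernoulli N i = wt N n i * Sc N i"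
      by (simp add: wt_def)
  qed simp
  finally show ?case using Sc_rec[OF less.prems] by simp
qed

theorem proposition5:
  fixes N n :: nat
  assumes "N \<ge> 2" and "n \<ge> 1"
  shows "hyp_bernoulli N n =
    real N / real (N + n) *
    (\<Sum>m=0..n-1. \<Sum>i\<in>chains n m.
        hyp_bernoulli (N - 1) (i m) *
        (\<Prod>k=1..m. hyp_bernoulli (N - 1) (i (k - 1) - i k + 1) *
                    real (i (k - 1) choose (i (k - 1) - i k + 1)) *
                    (real N / real (N + i k))))"
  using main[OF assms] unfolding Sc_def Tc_def Fc_def wt_def .

end
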